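(* Let $(F,G)$ be an $(N,n)$ dual pair for $\mathcal H$. Then: (i) if $(F,G)\in\mathcal F^{(1)}$ then $(F,G)\in\mathcal R^{(1)}$; (ii) $(F,G)\in\mathcal F^{(1)}$ if and only if $(F,G)\in\mathcal N^{(1)}$; (iii) if $(F,G)\in\mathcal N^{(1)}$ then $(F,G)\in\mathcal R^{(1)}$.
   Context: $\mathcal H$ is a complex Hilbert space of finite dimension $n$, inner product linear in the first argument, $N\ge n$. A finite sequence $F=\{f_i\}_{i=1}^N$ is a frame if there are $0<A\le B$ with $A\|f\|^2\le\sum_i|\langle f,f_i\rangle|^2\le B\|f\|^2$ for all $f$. $G=\{g_i\}_{i=1}^N$ is a dual of $F$ if $f=\sum_i\langle f,g_i\rangle f_i$ for all $f$; $(F,G)$ is then an $(N,n)$ dual pair. $E_{\Lambda,F,G}f=\sum_{i\in\Lambda}\langle f,f_i\rangle g_i$. For a measure $\mathcal M$ on operators, let $\mathcal M^{(1)}_{F,G}=\max_{1\le i\le N}\mathcal M(E_{\{i\},F,G})$ and call $(F,G)$ optimal for $\mathcal M$ if $\mathcal M^{(1)}_{F,G}$ equals the infimum of $\mathcal M^{(1)}_{F',G'}$ over all $(N,n)$ dual pairs $(F',G')$ for $\mathcal H$. $\mathcal F^{(1)}$, $\mathcal R^{(1)}$, $\mathcal N^{(1)}$ denote the sets of optimal pairs for, respectively, the Frobenius norm $\|T\|_{\mathcal F}=\sqrt{\operatorname{tr}(T^*T)}$, the spectral radius $\rho(T)$, and the numerical radius $\omega(T)=\sup\{|\langle Tf,f\rangle|:\|f\|=1\}$.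 *)

theory Defs
  imports "HOL-Analysis.Analysis"
begin

text \<open>The n-dimensional complex Hilbert space is modelled as complex^'n
  (dimension n = CARD('n)), with the standard inner product, linear in the
  first argument. Operators are n x n complex matrices acting on columns.\<close>

definition cinner :: "complex^'n \<Rightarrow> complex^'n \<Rightarrow> complex" where
  "cinner x y = (\<Sum>j\<in>UNIV. x $ j * cnj (y $ j))"

definition hnorm :: "complex^'n \<Rightarrow> real" where
  "hnorm x = sqrt (Re (cinner x x))"

definition is_frame :: "('m::finite \<Rightarrow> complex^'n) \<Rightarrow> bool" where
  "is_frame F \<longleftrightarrow> (\<exists>A B. 0 < A \<and> A \<le> B \<and>
     (\<forall>f. A * (hnorm f)^2 \<le> (\<Sum>i\<in>UNIV. (cmod (cinner f (F i)))^2)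
        \<and> (\<Sum>i\<in>UNIV. (cmod (cinner f (F i)))^2) \<le> B * (hnorm f)^2))"

definition is_dual :: "('m::finite \<Rightarrow> complex^'n) \<Rightarrow> ('m \<Rightarrow> complex^'n) \<Rightarrow> bool" where
  "is_dual F G \<longleftrightarrow> (\<forall>f. f = (\<Sum>i\<in>UNIV. cinner f (G i) *s F i))"

definition dual_pair :: "('m::finite \<Rightarrow> complex^'n) \<Rightarrow> ('m \<Rightarrow> complex^'n) \<Rightarrow> bool" where
  "dual_pair F G \<longleftrightarrow> is_frame F \<and> is_dual F G"

definition E_op :: "'m set \<Rightarrow> ('m \<Rightarrow> complex^'n) \<Rightarrow> ('m \<Rightarrow> complex^'n) \<Rightarrow> complex^'n \<Rightarrow> complex^'n" where
  "E_op L F G f = (\<Sum>i\<in>L. cinner f (F i) *s G i)"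

definition E_mat :: "'m set \<Rightarrow> ('m \<Rightarrow> complex^'n) \<Rightarrow> ('m \<Rightarrow> complex^'n) \<Rightarrow> complex^'n^'n" where
  "E_mat L F G = (\<chi> j k. E_op L F G (axis k 1) $ j)"

definition cadj :: "complex^'n^'n \<Rightarrow> complex^'n^'n" where
  "cadj T = (\<chi> i j. cnj (T $ j $ i))"

definition ctrace :: "complex^'n^'n \<Rightarrow> complex" where
  "ctrace T = (\<Sum>i\<in>UNIV. T $ i $ i)"

definition frob_norm :: "complex^'n^'n \<Rightarrow> real" where
  "frob_norm T = sqrt (Re (ctrace (cadj T ** T)))"

definition cspectrum :: "complex^'n^'n \<Rightarrow> complex set" where
  "cspectrum T = {c. \<exists>v. v \<noteq> 0 \<and> T *v v = c *s v}"

definition spec_radius :: "complex^'n^'n \<Rightarrow> real" where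
  "spec_radius T = Sup (cmod ` cspectrum T)"

definition num_radius :: "complex^'n^'n \<Rightarrow> real" where
  "num_radius T = Sup {cmod (cinner (T *v f) f) | f. hnorm f = 1}"

definition M1 :: "(complex^'n^'n \<Rightarrow> real) \<Rightarrow> ('m::finite \<Rightarrow> complex^'n) \<Rightarrow> ('m \<Rightarrow> complex^'n) \<Rightarrow> real" where
  "M1 M F G = Max ((\<lambda>i. M (E_mat {i} F G)) ` UNIV)"

definition optimal :: "(complex^'n^'n \<Rightarrow> real) \<Rightarrow> ('m::finite \<Rightarrow> complex^'n) \<Rightarrow> ('m \<Rightarrow> complex^'n) \<Rightarrow> bool" where
  "optimal M F G \<longleftrightarrow> dual_pair F G \<and>
     M1 M F G = Inf {M1 M F' G' | (F' :: 'm \<Rightarrow> complex^'n) G'. dual_pair F' G'}"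

end

theory Submission
  imports Defs
begin



lemma cinner_add_left: "cinner (x + y) z = cinner x z + cinner y z"
  by (simp add: cinner_def distrib_right sum.distrib)
lemma cinner_add_right: "cinner z (x + y) = cinner z x + cinner z y"
  by (simp add: cinner_def distrib_left sum.distrib)
lemma cinner_scale_left: "cinner (c *s x) y = c * cinner x y"
  by (simp add: cinner_def sum_distrib_left mult.assoc)
lemma cinner_scale_right: "cinner x (c *s y) = cnj c * cinner x y"
  by (simp add: cinner_def sum_distrib_left algebra_simps)
lemma cinner_commute: "cinner y x = cnj (cinner x y)"
  by (simp add: cinner_def mult.commute)
lemma cinner_self: "cinner x x = complex_of_real (\<Sum>j\<in>UNIV. (cmod (x $ j))^2)"
  by (simp add: cinner_def complex_norm_square[symmetric])
lemma cinner_zero_left[simp]: "cinner 0 x = 0" by (simp add: cinner_def)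
lemma cinner_zero_right[simp]: "cinner x 0 = 0" by (simp add: cinner_def)

definition rv :: "complex^'n \<Rightarrow> real^'n" where "rv x = (\<chi> j. cmod (x $ j))"

lemma hnorm_rv: "hnorm x = norm (rv x)"
  by (simp add: hnorm_def cinner_self norm_vec_def L2_set_def rv_def)

lemma hnorm_sq: "cinner x x = complex_of_real ((hnorm x)^2)"
  by (simp add: hnorm_def cinner_self sum_nonneg)

lemma hnorm_nonneg: "hnorm x \<ge> 0" by (simp add: hnorm_rv)

lemma hnorm_zero_iff: "hnorm x = 0 \<longleftrightarrow> x = 0"
proof -
  have "rv x = 0 \<longleftrightarrow> x = 0"
    by (auto simp: rv_def vec_eq_iff)
  thus ?thesis by (simp add: hnorm_rv)
qed

lemma cauchy_schwarz: "cmod (cinner x y) \<le> hnorm x * hnorm y"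
proof -
  have "cmod (cinner x y) \<le> (\<Sum>j\<in>UNIV. cmod (x $ j * cnj (y $ j)))"
    unfolding cinner_def by (rule norm_sum)
  also have "\<dots> = inner (rv x) (rv y)"
    by (simp add: inner_vec_def rv_def norm_mult)
  also have "\<dots> \<le> norm (rv x) * norm (rv y)" by (rule norm_cauchy_schwarz)
  finally show ?thesis by (simp add: hnorm_rv)
qed

lemma hnorm_scale_real: "r \<ge> 0 \<Longrightarrow> hnorm (complex_of_real r *s x) = r * hnorm x"
proof -
  assume r: "r \<ge> 0"
  have "cinner (complex_of_real r *s x) (complex_of_real r *s x) = complex_of_real (r^2) * cinner x x"
    by (simp add: cinner_scale_left cinner_scale_right power2_eq_square)
  hence "complex_of_real ((hnorm (complex_of_real r *s x))^2) = complex_of_real ((r * hnorm x)^2)"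
    unfolding hnorm_sq by (simp add: power_mult_distrib)
  hence "(hnorm (complex_of_real r *s x))^2 = (r * hnorm x)^2" using of_real_eq_iff by blast
  thus ?thesis using r hnorm_nonneg[of x] hnorm_nonneg[of "complex_of_real r *s x"]
    by (metis mult_nonneg_nonneg power2_eq_iff_nonneg)
qed



lemma cinner_axis: "cinner (axis k 1) f = cnj (f $ k)"
proof -
  have "cinner (axis k 1) f = (\<Sum>j\<in>UNIV. if j = k then cnj (f $ k) else 0)"
    unfolding cinner_def axis_def by (intro sum.cong) auto
  thus ?thesis by simp
qed

lemma E_mat_entry: "E_mat {i} F G $ j $ k = cnj (F i $ k) * G i $ j"
  by (simp add: E_mat_def E_op_def cinner_axis)

lemma E_mat_mulv: "E_mat {i} F G *v v = cinner v (F i) *s G i"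
  by (simp add: matrix_vector_mult_def E_mat_entry vec_eq_iff cinner_def sum_distrib_left algebra_simps)

lemma frob_E: "frob_norm (E_mat {i} F G) = hnorm (F i) * hnorm (G i)"
proof -
  have "ctrace (cadj (E_mat {i} F G) ** E_mat {i} F G) = cinner (F i) (F i) * cinner (G i) (G i)"
    by (simp add: ctrace_def cadj_def matrix_matrix_mult_def E_mat_entry cinner_def
         sum_distrib_left sum_distrib_right algebra_simps)
       (rule sum.swap)
  also have "\<dots> = complex_of_real ((hnorm (F i) * hnorm (G i))^2)"
    by (simp add: hnorm_sq power_mult_distrib)
  finally show ?thesis
    by (simp add: frob_norm_def hnorm_nonneg)
qed

lemma spec_E: "spec_radius (E_mat {i} F G) = cmod (cinner (G i) (F i))"
proof -
  let ?c = "cinner (G i) (F i)"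
  have sub: "cspectrum (E_mat {i} F G) \<subseteq> {0, ?c}"
  proof
    fix c assume "c \<in> cspectrum (E_mat {i} F G)"
    then obtain v where v: "v \<noteq> 0" "cinner v (F i) *s G i = c *s v"
      by (auto simp: cspectrum_def E_mat_mulv)
    show "c \<in> {0, ?c}"
    proof (cases "c = 0")
      case False
      have "cinner (cinner v (F i) *s G i) (F i) = cinner (c *s v) (F i)" using v by simp
      hence "cinner v (F i) * ?c = c * cinner v (F i)" by (simp add: cinner_scale_left)
      moreover have "cinner v (F i) \<noteq> 0"
      proof
        assume "cinner v (F i) = 0"
        hence "c *s v = 0" using v by simp
        thus False using v False by (simp add: vec_eq_iff)
      qed
      ultimately show ?thesis by simp
    qed simp
  qed
  have mem: "?c \<in> cspectrum (E_mat {i} F G)"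
  proof (cases "G i = 0")
    case True
    have "axis undefined (1::complex) \<noteq> 0" by (simp add: axis_eq_0_iff)
    thus ?thesis using True unfolding cspectrum_def E_mat_mulv
      by (intro CollectI exI[of _ "axis undefined 1"]) simp
  next
    case False thus ?thesis unfolding cspectrum_def E_mat_mulv by auto
  qed
  have "cmod ` cspectrum (E_mat {i} F G) \<subseteq> {0, cmod ?c}" using sub by auto
  hence "Sup (cmod ` cspectrum (E_mat {i} F G)) = cmod ?c"
    using mem by (intro cSup_eq_maximum) auto
  thus ?thesis by (simp add: spec_radius_def)
qed



lemma hnorm_axis: "hnorm (axis k (1::complex)) = 1"
  by (simp add: hnorm_def cinner_axis)

definition numset :: "complex^'n^'n \<Rightarrow> real set" where
  "numset T = {cmod (cinner (T *v f) f) | f. hnorm f = 1}"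

lemma num_E_val: "cinner (E_mat {i} F G *v x) x = cinner x (F i) * cinner (G i) x"
  by (simp add: E_mat_mulv cinner_scale_left)

lemma numset_bound:
  assumes "y \<in> numset (E_mat {i} F G)"
  shows "y \<le> hnorm (F i) * hnorm (G i)"
proof -
  obtain x where x: "hnorm x = 1" "y = cmod (cinner x (F i) * cinner (G i) x)"
    using assms by (auto simp: numset_def num_E_val)
  have "y = cmod (cinner x (F i)) * cmod (cinner (G i) x)" using x by (simp add: norm_mult)
  also have "\<dots> \<le> (hnorm x * hnorm (F i)) * (hnorm (G i) * hnorm x)"
    by (intro mult_mono cauchy_schwarz) (auto simp: hnorm_nonneg mult_nonneg_nonneg)
  finally show ?thesis using x by simp
qed

lemma numset_ne: "numset T \<noteq> {}"
  using hnorm_axis[of undefined] by (auto simp: numset_def)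

lemma num_upper: "num_radius (E_mat {i} F G) \<le> hnorm (F i) * hnorm (G i)"
  unfolding num_radius_def numset_def[symmetric]
  by (rule cSup_least[OF numset_ne]) (rule numset_bound)

lemma num_ge:
  assumes "hnorm x = 1"
  shows "cmod (cinner x (F i) * cinner (G i) x) \<le> num_radius (E_mat {i} F G)"
  unfolding num_radius_def numset_def[symmetric]
proof (rule cSup_upper)
  show "cmod (cinner x (F i) * cinner (G i) x) \<in> numset (E_mat {i} F G)"
    using assms by (auto simp: numset_def num_E_val)
  show "bdd_above (numset (E_mat {i} F G))"
    by (intro bdd_aboveI[where M="hnorm (F i) * hnorm (G i)"]) (rule numset_bound)
qed

lemma num_lower: "cmod (cinner (G i) (F i)) \<le> num_radius (E_mat {i} F G)"
proof (cases "G i = 0")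
  case True
  have "0 \<le> num_radius (E_mat {i} F G)"
    using num_ge[OF hnorm_axis[of undefined], of F i G] by (meson norm_ge_zero order_trans)
  thus ?thesis using True by simp
next
  case False
  let ?g = "G i" let ?f = "F i"
  have gp: "hnorm ?g > 0" using False hnorm_nonneg hnorm_zero_iff by (metis less_eq_real_def)
  define x where "x = complex_of_real (1 / hnorm ?g) *s ?g"
  have hx: "hnorm x = 1" using gp unfolding x_def by (subst hnorm_scale_real) auto
  have "cinner x ?f * cinner ?g x = complex_of_real (1 / hnorm ?g)^2 * cinner ?g ?g * cinner ?g ?f"
    by (simp add: x_def cinner_scale_left cinner_scale_right power2_eq_square)
  also have "\<dots> = cinner ?g ?f" using gp by (simp add: hnorm_sq[of "G i"] power2_eq_square)
  finally show ?thesis using num_ge[OF hx, of F i G] by simp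
qed

lemma num_lower2:
  assumes "cinner (G i) (F i) = complex_of_real r" "r > 0"
  shows "(hnorm (F i) * hnorm (G i) + r) / 2 \<le> num_radius (E_mat {i} F G)"
proof -
  let ?g = "G i" let ?f = "F i"
  have "?g \<noteq> 0" "?f \<noteq> 0" using assms by auto
  hence gp: "hnorm ?g > 0" and fp: "hnorm ?f > 0"
    using hnorm_nonneg hnorm_zero_iff by (metis less_eq_real_def)+
  define P where "P = hnorm ?f * hnorm ?g"
  have Pp: "P > 0" using gp fp by (simp add: P_def)
  define u where "u = complex_of_real (1 / hnorm ?f) *s ?f"
  define v where "v = complex_of_real (1 / hnorm ?g) *s ?g"
  define t where "t = r / P"
  have tp: "t > 0" using Pp assms by (simp add: t_def)
  have uu: "cinner u u = 1" using fp by (simp add: u_def cinner_scale_left cinner_scale_right hnorm_sq[of "F i"] power2_eq_square)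
  have vv: "cinner v v = 1" using gp by (simp add: v_def cinner_scale_left cinner_scale_right hnorm_sq[of "G i"] power2_eq_square)
  have vu: "cinner v u = complex_of_real t"
    using assms(1) by (simp add: u_def v_def t_def P_def cinner_scale_left cinner_scale_right)
  have uv: "cinner u v = complex_of_real t" using vu cinner_commute[of u v] by simp
  define w where "w = u + v"
  have ww: "cinner w w = complex_of_real (2 + 2 * t)"
    by (simp add: w_def cinner_add_left cinner_add_right uu vv uv vu)
  have hw: "hnorm w = sqrt (2 + 2 * t)"
    using ww by (simp add: hnorm_def)
  have hwp: "hnorm w > 0" using hw tp by simp
  define x where "x = complex_of_real (1 / hnorm w) *s w"
  have hx: "hnorm x = 1" using hwp unfolding x_def by (subst hnorm_scale_real) auto
  have f_eq: "?f = complex_of_real (hnorm ?f) *s u" using fp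
    by (simp add: u_def vec_eq_iff)
  have g_eq: "?g = complex_of_real (hnorm ?g) *s v" using gp
    by (simp add: v_def vec_eq_iff)
  have wf: "cinner w ?f = complex_of_real (hnorm ?f * (1 + t))"
    by (subst f_eq) (simp add: w_def cinner_add_left cinner_scale_right uu vu algebra_simps)
  have gw: "cinner ?g w = complex_of_real (hnorm ?g * (1 + t))"
    by (subst g_eq) (simp add: w_def cinner_add_right cinner_scale_left vv vu algebra_simps)
  have "cinner x ?f * cinner ?g x = complex_of_real ((1 / hnorm w)^2 * (hnorm ?f * (1 + t)) * (hnorm ?g * (1 + t)))"
    by (simp add: x_def cinner_scale_left cinner_scale_right wf gw power2_eq_square)
  also have "(1 / hnorm w)^2 * (hnorm ?f * (1 + t)) * (hnorm ?g * (1 + t)) = P * (1 + t) / 2"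
    using tp by (simp add: hw P_def power_divide field_simps power2_eq_square)
  also have "P * (1 + t) / 2 = (P + r) / 2" using Pp by (simp add: t_def field_simps)
  finally have "cinner x ?f * cinner ?g x = complex_of_real ((P + r) / 2)" .
  hence "cmod (cinner x ?f * cinner ?g x) = cmod (complex_of_real ((P + r) / 2))" by (rule arg_cong)
  also have "\<dots> = (P + r) / 2" using Pp assms(2) by (simp only: norm_of_real) simp
  finally have "cmod (cinner x ?f * cinner ?g x) = (P + r) / 2" .
  thus ?thesis using num_ge[OF hx, of F i G] by (simp add: P_def)
qed



lemma dual_trace:
  fixes F G :: "'m::finite \<Rightarrow> complex^'n"
  assumes "is_dual F G"
  shows "(\<Sum>i\<in>UNIV. cinner (G i) (F i)) = of_nat CARD('n)"
proof -
  have one: "(\<Sum>i\<in>UNIV. F i $ j * cnj (G i $ j)) = 1" for j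
  proof -
    have "axis j (1::complex) = (\<Sum>i\<in>UNIV. cinner (axis j 1) (G i) *s F i)"
      using assms unfolding is_dual_def by blast
    hence "axis j (1::complex) $ j = (\<Sum>i\<in>UNIV. cinner (axis j 1) (G i) *s F i) $ j" by simp
    thus ?thesis by (simp add: cinner_axis sum_component mult.commute)
  qed
  have "(\<Sum>i\<in>UNIV. cinner (F i) (G i)) = (\<Sum>j\<in>UNIV. \<Sum>i\<in>UNIV. F i $ j * cnj (G i $ j))"
    unfolding cinner_def by (rule sum.swap)
  also have "\<dots> = of_nat CARD('n)" by (simp add: one)
  finally have "(\<Sum>i\<in>UNIV. cinner (F i) (G i)) = of_nat CARD('n)" .
  hence "cnj (\<Sum>i\<in>UNIV. cinner (F i) (G i)) = of_nat CARD('n)" by simp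
  thus ?thesis by (simp add: cinner_commute[of "G _"])
qed

lemma all_equal:
  fixes c :: "'m::finite \<Rightarrow> complex"
  assumes "\<And>i. cmod (c i) \<le> v" "(\<Sum>i\<in>UNIV. c i) = of_real (real CARD('m) * v)"
  shows "c i = of_real v"
proof -
  have re: "Re (c j) \<le> v" for j using assms(1)[of j] abs_Re_le_cmod[of "c j"] by linarith
  have sre: "(\<Sum>j\<in>UNIV. Re (c j)) = (\<Sum>j\<in>(UNIV::'m set). v)"
    using arg_cong[OF assms(2), of Re] by (simp add: Re_sum)
  have rei: "Re (c i) = v"
  proof (rule ccontr)
    assume "Re (c i) \<noteq> v"
    hence "Re (c i) < v" using re[of i] by simp
    hence "(\<Sum>j\<in>UNIV. Re (c j)) < (\<Sum>j\<in>(UNIV::'m set). v)"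
      by (intro sum_strict_mono_ex1) (auto simp: re)
    thus False using sre by simp
  qed
  have "(Re (c i))^2 + (Im (c i))^2 = (cmod (c i))^2" by (simp add: cmod_power2)
  moreover have "(cmod (c i))^2 \<le> v^2" using assms(1)[of i] rei re
    by (metis norm_ge_zero power_mono)
  moreover have "(Re (c i))^2 = v^2" using rei by simp
  ultimately have "(Im (c i))^2 \<le> 0" by linarith
  hence "Im (c i) = 0" by simp
  thus ?thesis using rei by (simp add: complex_eq_iff)
qed

lemma exists_big:
  fixes c :: "'m::finite \<Rightarrow> complex"
  assumes "(\<Sum>i\<in>UNIV. c i) = of_real (real CARD('m) * v)"
  shows "\<exists>i. v \<le> cmod (c i)"
proof (rule ccontr)
  assume "\<not> ?thesis"
  hence lt: "Re (c j) < v" for j using abs_Re_le_cmod[of "c j"] by (meson abs_le_iff not_le order_trans)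
  have "(\<Sum>j\<in>UNIV. Re (c j)) < (\<Sum>j\<in>(UNIV::'m set). v)"
    by (intro sum_strict_mono) (auto simp: lt)
  moreover have "(\<Sum>j\<in>UNIV. Re (c j)) = (\<Sum>j\<in>(UNIV::'m set). v)"
    using arg_cong[OF assms, of Re] by (simp add: Re_sum)
  ultimately show False by simp
qed



lemma sum_swap3: "(\<Sum>i\<in>A. \<Sum>j\<in>B. \<Sum>k\<in>C. f i j k) = (\<Sum>j\<in>B. \<Sum>k\<in>C. \<Sum>i\<in>A. f i j k)"
  by (subst sum.swap) (rule sum.cong[OF refl], rule sum.swap)

lemma parseval_dual:
  fixes F :: "'m::finite \<Rightarrow> complex^'n"
  assumes S: "\<And>j k. (\<Sum>i\<in>UNIV. cnj (F i $ j) * F i $ k) = (if j = k then 1 else 0)"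
  shows "dual_pair F F"
proof -
  have dual: "is_dual F F"
    unfolding is_dual_def
  proof (intro allI)
    fix x :: "complex^'n"
    have "(\<Sum>i\<in>UNIV. cinner x (F i) *s F i) $ k = x $ k" for k
    proof -
      have "(\<Sum>i\<in>UNIV. cinner x (F i) *s F i) $ k = (\<Sum>i\<in>UNIV. \<Sum>j\<in>UNIV. x $ j * (cnj (F i $ j) * F i $ k))"
        by (simp add: sum_component cinner_def sum_distrib_left algebra_simps)
      also have "\<dots> = (\<Sum>j\<in>UNIV. x $ j * (\<Sum>i\<in>UNIV. cnj (F i $ j) * F i $ k))"
        by (subst sum.swap) (simp add: sum_distrib_left)
      also have "\<dots> = x $ k" by (simp add: S if_distrib cong: if_cong)
      finally show ?thesis .
    qed
    thus "x = (\<Sum>i\<in>UNIV. cinner x (F i) *s F i)" by (simp add: vec_eq_iff)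
  qed
  have pars: "(\<Sum>i\<in>UNIV. (cmod (cinner x (F i)))^2) = (hnorm x)^2" for x
  proof -
    have "complex_of_real (\<Sum>i\<in>UNIV. (cmod (cinner x (F i)))^2)
        = (\<Sum>i\<in>UNIV. cinner x (F i) * cnj (cinner x (F i)))"
      by (simp only: of_real_sum complex_norm_square)
    also have "\<dots> = (\<Sum>i\<in>UNIV. \<Sum>j\<in>UNIV. \<Sum>k\<in>UNIV. x $ j * cnj (x $ k) * (cnj (F i $ j) * F i $ k))"
      by (simp add: cinner_def sum_distrib_left sum_distrib_right algebra_simps)
         (rule sum.cong[OF refl], rule sum.swap)
    also have "\<dots> = (\<Sum>j\<in>UNIV. \<Sum>k\<in>UNIV. x $ j * cnj (x $ k) * (\<Sum>i\<in>UNIV. cnj (F i $ j) * F i $ k))"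
      by (subst sum_swap3) (simp add: sum_distrib_left)
    also have "\<dots> = cinner x x" by (simp add: S cinner_def if_distrib cong: if_cong)
    also have "\<dots> = complex_of_real ((hnorm x)^2)" by (rule hnorm_sq)
    finally show ?thesis using of_real_eq_iff by blast
  qed
  have "is_frame F" unfolding is_frame_def
    by (intro exI[of _ 1]) (simp add: pars)
  thus ?thesis using dual by (simp add: dual_pair_def)
qed



lemma root_sum:
  fixes N :: nat and d :: int
  assumes "N > 0" "\<bar>d\<bar> < int N"
  shows "(\<Sum>m<N. exp (2 * pi * \<i> * of_int d / of_nat N) ^ m) = (if d = 0 then of_nat N else 0)"
proof (cases "d = 0")
  case True thus ?thesis by simp
next
  case False
  let ?z = "exp (2 * pi * \<i> * of_int d / of_nat N)"
  have zN: "?z ^ N = 1"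
  proof -
    have eq: "of_nat N * (2 * pi * \<i> * of_int d / of_nat N) = 2 * pi * \<i> * (of_int d :: complex)"
      using assms(1) by simp
    have "?z ^ N = exp (of_nat N * (2 * pi * \<i> * of_int d / of_nat N))"
      by (rule exp_of_nat_mult[symmetric])
    also have "\<dots> = exp (2 * pi * \<i> * of_int d)" by (simp only: eq)
    also have "\<dots> = 1" by (subst exp_eq_1) (auto intro!: exI[of _ d])
    finally show ?thesis .
  qed
  have z1: "?z \<noteq> 1"
  proof
    assume "?z = 1"
    then obtain m :: int where m: "Im (2 * pi * \<i> * of_int d / of_nat N) = of_int (2 * m) * pi"
      by (auto simp: exp_eq_1)
    hence "2 * pi * of_int d / real N = of_int (2 * m) * pi" by simp
    hence "real_of_int d = real_of_int m * real N" using assms(1) by (simp add: field_simps)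
    hence dm: "d = m * int N" by (metis of_int_eq_iff of_int_mult of_int_of_nat_eq)
    show False
    proof (cases "m = 0")
      case True thus False using dm False by simp
    next
      case False
      hence "\<bar>m\<bar> \<ge> 1" by simp
      hence "\<bar>d\<bar> \<ge> int N" using dm by (simp add: abs_mult mult_le_cancel_right1)
      thus False using assms(2) by simp
    qed
  qed
  show ?thesis using False z1 zN by (simp add: geometric_sum)
qed

lemma frame_exists:
  assumes "CARD('n) \<le> CARD('m::finite)"
  shows "\<exists>F :: 'm \<Rightarrow> complex^'n. dual_pair F F \<and>
           (\<forall>i. cinner (F i) (F i) = complex_of_real (real CARD('n) / real CARD('m)))"
proof -
  define N where "N = CARD('m)"
  define n where "n = CARD('n)"
  have Np: "N > 0" by (simp add: N_def)
  obtain e :: "'m \<Rightarrow> nat" where e: "bij_betw e UNIV {0..<N}"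
    using ex_bij_betw_finite_nat[of "UNIV :: 'm set"] by (auto simp: N_def)
  obtain c :: "'n \<Rightarrow> nat" where c: "bij_betw c UNIV {0..<n}"
    using ex_bij_betw_finite_nat[of "UNIV :: 'n set"] by (auto simp: n_def)
  have cinj: "c j = c k \<longleftrightarrow> j = k" for j k using c by (auto simp: bij_betw_def inj_on_def)
  have cb: "c j < n" for j using c by (auto simp: bij_betw_def)
  define F :: "'m \<Rightarrow> complex^'n" where
    "F i = (\<chi> k. complex_of_real (1 / sqrt N) * exp (2 * pi * \<i> * of_nat (e i * c k) / of_nat N))" for i
  have prod: "cnj (F i $ j) * F i $ k =
      complex_of_real (1 / N) * exp (2 * pi * \<i> * of_int (int (c k) - int (c j)) / of_nat N) ^ e i" for i j k
  proof -
    have "cnj (F i $ j) * F i $ k = complex_of_real (1 / sqrt N) ^ 2 *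
        (exp (- (2 * pi * \<i> * of_nat (e i * c j) / of_nat N)) * exp (2 * pi * \<i> * of_nat (e i * c k) / of_nat N))"
      by (simp add: F_def exp_cnj power2_eq_square)
    also have "complex_of_real (1 / sqrt N) ^ 2 = complex_of_real (1 / N)"
      by (simp add: power_divide flip: of_real_power)
    also have "exp (- (2 * pi * \<i> * of_nat (e i * c j) / of_nat N)) * exp (2 * pi * \<i> * of_nat (e i * c k) / of_nat N)
        = exp (of_nat (e i) * (2 * pi * \<i> * of_int (int (c k) - int (c j)) / of_nat N))"
      unfolding exp_add[symmetric] by (rule arg_cong[where f=exp]) (simp add: algebra_simps diff_divide_distrib)
    also have "\<dots> = exp (2 * pi * \<i> * of_int (int (c k) - int (c j)) / of_nat N) ^ e i"
      by (rule exp_of_nat_mult)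
    finally show ?thesis .
  qed
  have S: "(\<Sum>i\<in>UNIV. cnj (F i $ j) * F i $ k) = (if j = k then 1 else 0)" for j k
  proof -
    let ?z = "exp (2 * pi * \<i> * of_int (int (c k) - int (c j)) / of_nat N)"
    have "(\<Sum>i\<in>UNIV. cnj (F i $ j) * F i $ k) = complex_of_real (1 / N) * (\<Sum>i\<in>UNIV. ?z ^ e i)"
      by (simp add: prod sum_distrib_left)
    also have "(\<Sum>i\<in>UNIV. ?z ^ e i) = (\<Sum>m\<in>{0..<N}. ?z ^ m)"
      by (rule sum.reindex_bij_betw[OF e])
    also have "\<dots> = (if int (c k) - int (c j) = 0 then of_nat N else 0)"
      using root_sum[OF Np, of "int (c k) - int (c j)"] cb[of j] cb[of k] assms
      by (simp add: atLeast0LessThan n_def N_def)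
    finally show ?thesis using Np cinj[of k j] by auto
  qed
  have nrm: "cinner (F i) (F i) = complex_of_real (real n / real N)" for i
  proof -
    have "cinner (F i) (F i) = (\<Sum>k\<in>UNIV. F i $ k * cnj (F i $ k))" by (simp add: cinner_def)
    also have "\<dots> = (\<Sum>k\<in>(UNIV::'n set). complex_of_real (1 / N))"
    proof (intro sum.cong refl)
      fix k
      show "F i $ k * cnj (F i $ k) = complex_of_real (1 / N)"
        using prod[of i k k] by (simp add: mult.commute)
    qed
    also have "\<dots> = complex_of_real (real n / real N)" by (simp add: n_def)
    finally show ?thesis .
  qed
  show ?thesis using parseval_dual[OF S] nrm by (auto simp: n_def N_def)
qed



lemma M1_ge: "M (E_mat {i} F G) \<le> M1 M (F :: 'm::finite \<Rightarrow> complex^'n) G"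
  unfolding M1_def by (rule Max_ge) auto

lemma M1_le: "(\<And>i. M (E_mat {i} F G) \<le> a) \<Longrightarrow> M1 M (F :: 'm::finite \<Rightarrow> complex^'n) G \<le> a"
  unfolding M1_def by (subst Max_le_iff) auto

lemma trace_real:
  fixes F G :: "'m::finite \<Rightarrow> complex^'n"
  assumes "dual_pair F G"
  shows "(\<Sum>i\<in>UNIV. cinner (G i) (F i)) = of_real (real CARD('m) * (real CARD('n) / real CARD('m)))"
  using dual_trace[of F G] assms by (simp add: dual_pair_def)

lemma lower_spec:
  fixes F G :: "'m::finite \<Rightarrow> complex^'n"
  assumes "dual_pair F G"
  shows "real CARD('n) / real CARD('m) \<le> M1 spec_radius F G"
proof -
  obtain i where "real CARD('n) / real CARD('m) \<le> cmod (cinner (G i) (F i))"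
    using exists_big[OF trace_real[OF assms]] by blast
  thus ?thesis using M1_ge[of spec_radius i F G] by (simp add: spec_E)
qed

lemma lower_all:
  fixes F G :: "'m::finite \<Rightarrow> complex^'n"
  assumes "dual_pair F G"
  shows "real CARD('n) / real CARD('m) \<le> M1 num_radius F G"
        "real CARD('n) / real CARD('m) \<le> M1 frob_norm F G"
proof -
  have a: "M1 spec_radius F G \<le> M1 num_radius F G"
  proof (rule M1_le)
    fix i show "spec_radius (E_mat {i} F G) \<le> M1 num_radius F G"
      using num_lower[of G i F] M1_ge[of num_radius i F G] by (simp add: spec_E)
  qed
  have b: "M1 num_radius F G \<le> M1 frob_norm F G"
  proof (rule M1_le)
    fix i show "num_radius (E_mat {i} F G) \<le> M1 frob_norm F G"
      using num_upper[of i F G] M1_ge[of frob_norm i F G] by (simp add: frob_E)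
  qed
  show "real CARD('n) / real CARD('m) \<le> M1 num_radius F G"
       "real CARD('n) / real CARD('m) \<le> M1 frob_norm F G"
    using lower_spec[OF assms] a b by linarith+
qed

lemma optimal_iff:
  fixes F G F0 :: "'m::finite \<Rightarrow> complex^'n"
  assumes low: "\<And>F G :: 'm \<Rightarrow> complex^'n. dual_pair F G \<Longrightarrow> v \<le> M1 M F G"
    and F0: "dual_pair F0 F0" "M1 M F0 F0 = v"
  shows "optimal M F G \<longleftrightarrow> dual_pair F G \<and> M1 M F G = v"
proof -
  have "Inf {M1 M F' G' | (F' :: 'm \<Rightarrow> complex^'n) G'. dual_pair F' G'} = v"
    by (rule cInf_eq_minimum) (use F0 low in auto)
  thus ?thesis by (simp add: optimal_def)
qed



theorem theorem6p1:
  fixes F G :: "'m::finite \<Rightarrow> complex^'n"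
  assumes "CARD('n) \<le> CARD('m)"
    and "dual_pair F G"
  shows "(optimal frob_norm F G \<longrightarrow> optimal spec_radius F G)
       \<and> (optimal frob_norm F G \<longleftrightarrow> optimal num_radius F G)
       \<and> (optimal num_radius F G \<longrightarrow> optimal spec_radius F G)"
proof -
  define v where "v = real CARD('n) / real CARD('m)"
  have vp: "v > 0" by (simp add: v_def)
  obtain F0 :: "'m \<Rightarrow> complex^'n" where F0: "dual_pair F0 F0"
    "\<And>i. cinner (F0 i) (F0 i) = complex_of_real v"
    using frame_exists[OF assms(1)] v_def by blast
  have hn: "hnorm (F0 i) * hnorm (F0 i) = v" for i
  proof -
    have "complex_of_real (hnorm (F0 i) * hnorm (F0 i)) = complex_of_real v"
      using F0(2)[of i] hnorm_sq[of "F0 i"] by (simp add: power2_eq_square)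
    thus ?thesis using of_real_eq_iff by blast
  qed
  have sp0: "spec_radius (E_mat {i} F0 F0) = v" for i using vp by (simp add: spec_E F0(2))
  have fr0: "frob_norm (E_mat {i} F0 F0) = v" for i by (simp add: frob_E hn)
  have nu0: "num_radius (E_mat {i} F0 F0) = v" for i
    using num_upper[of i F0 F0] num_lower[of F0 i F0] hn sp0[of i] by (simp add: spec_E)
  have eqv: "M1 M F0 F0 = v" if "\<And>i. M (E_mat {i} F0 F0) = v" for M
  proof (rule order_antisym)
    show "M1 M F0 F0 \<le> v" by (rule M1_le) (simp add: that)
    show "v \<le> M1 M F0 F0" using M1_ge[of M undefined F0 F0] that[of undefined] by simp
  qed
  have oF: "optimal frob_norm F G \<longleftrightarrow> M1 frob_norm F G = v"
  proof -
    have "optimal frob_norm F G \<longleftrightarrow> dual_pair F G \<and> M1 frob_norm F G = v"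
    proof (rule optimal_iff[of v _ F0])
      fix F' G' :: "'m \<Rightarrow> complex^'n" assume "dual_pair F' G'"
      thus "v \<le> M1 frob_norm F' G'" unfolding v_def by (rule lower_all(2))
    qed (use F0(1) eqv[of frob_norm] fr0 in auto)
    thus ?thesis using assms(2) by simp
  qed
  have oS: "optimal spec_radius F G \<longleftrightarrow> M1 spec_radius F G = v"
  proof -
    have "optimal spec_radius F G \<longleftrightarrow> dual_pair F G \<and> M1 spec_radius F G = v"
    proof (rule optimal_iff[of v _ F0])
      fix F' G' :: "'m \<Rightarrow> complex^'n" assume "dual_pair F' G'"
      thus "v \<le> M1 spec_radius F' G'" unfolding v_def by (rule lower_spec)
    qed (use F0(1) eqv[of spec_radius] sp0 in auto)
    thus ?thesis using assms(2) by simp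
  qed
  have oN: "optimal num_radius F G \<longleftrightarrow> M1 num_radius F G = v"
  proof -
    have "optimal num_radius F G \<longleftrightarrow> dual_pair F G \<and> M1 num_radius F G = v"
    proof (rule optimal_iff[of v _ F0])
      fix F' G' :: "'m \<Rightarrow> complex^'n" assume "dual_pair F' G'"
      thus "v \<le> M1 num_radius F' G'" unfolding v_def by (rule lower_all(1))
    qed (use F0(1) eqv[of num_radius] nu0 in auto)
    thus ?thesis using assms(2) by simp
  qed
  have lS: "v \<le> M1 spec_radius F G" and lN: "v \<le> M1 num_radius F G" and lF: "v \<le> M1 frob_norm F G"
    using lower_spec[OF assms(2)] lower_all[OF assms(2)] by (simp_all add: v_def)
  have fromF: "M1 spec_radius F G = v \<and> M1 num_radius F G = v" if "M1 frob_norm F G = v"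
  proof -
    have P: "hnorm (F i) * hnorm (G i) \<le> v" for i
      using M1_ge[of frob_norm i F G] that by (simp add: frob_E)
    have "M1 spec_radius F G \<le> v"
    proof (rule M1_le)
      fix i show "spec_radius (E_mat {i} F G) \<le> v"
        using cauchy_schwarz[of "G i" "F i"] P[of i] by (simp add: spec_E mult.commute)
    qed
    moreover have "M1 num_radius F G \<le> v"
    proof (rule M1_le)
      fix i show "num_radius (E_mat {i} F G) \<le> v"
        using num_upper[of i F G] P[of i] by simp
    qed
    ultimately show ?thesis using lS lN by simp
  qed
  have fromN: "M1 spec_radius F G = v \<and> M1 frob_norm F G = v" if "M1 num_radius F G = v"
  proof -
    have nb: "num_radius (E_mat {i} F G) \<le> v" for i
      using M1_ge[of num_radius i F G] that by simp
    have cb: "cmod (cinner (G i) (F i)) \<le> v" for i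
      using num_lower[of G i F] nb[of i] by simp
    have ceq: "cinner (G i) (F i) = complex_of_real v" for i
      using all_equal[of "\<lambda>i. cinner (G i) (F i)" v, OF cb] trace_real[OF assms(2)]
      by (simp add: v_def)
    have "M1 frob_norm F G \<le> v"
    proof (rule M1_le)
      fix i show "frob_norm (E_mat {i} F G) \<le> v"
        using num_lower2[of G i F v, OF ceq[of i] vp] nb[of i] by (simp add: frob_E)
    qed
    moreover have "M1 spec_radius F G \<le> v"
    proof (rule M1_le)
      fix i show "spec_radius (E_mat {i} F G) \<le> v"
        using cb[of i] by (simp add: spec_E)
    qed
    ultimately show ?thesis using lS lF by simp
  qed
  show ?thesis using oF oS oN fromF fromN by blast
qed


end
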